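(* Let $0<\alpha<1$ and $\sigma=1-\alpha/2$. For every integer $s\ge1$, $$\frac12<\varkappa_s<\frac{1}{2-\alpha},\qquad\text{where}\quad \varkappa_s=\frac{(s+\sigma)^{2-\alpha}-(s-1+\sigma)^{2-\alpha}-(2-\alpha)(s-1+\sigma)^{1-\alpha}}{(2-\alpha)\big((s+\sigma)^{1-\alpha}-(s-1+\sigma)^{1-\alpha}\big)}.$$ *)

theory Defs
  imports Complex_Main
begin

definition kappa :: "real \<Rightarrow> nat \<Rightarrow> real" where
  "kappa \<alpha> s = (let \<sigma> = 1 - \<alpha> / 2 in
     ((real s + \<sigma>) powr (2 - \<alpha>) - (real s - 1 + \<sigma>) powr (2 - \<alpha>)
       - (2 - \<alpha>) * (real s - 1 + \<sigma>) powr (1 - \<alpha>))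
     / ((2 - \<alpha>) * ((real s + \<sigma>) powr (1 - \<alpha>) - (real s - 1 + \<sigma>) powr (1 - \<alpha>))))"

end

theory Submission
  imports Defs
begin

lemma conc_mvt:
  fixes a t g :: real
  assumes a: "a > 0" and t: "t > 0" and g: "0 < g" "g < 1"
  shows "(a+t) powr g - a powr g < g*t*a powr (g-1)"
    and "(a+t) powr g - a powr g > g*t*(a+t) powr (g-1)"
proof -
  have "\<exists>z. a < z \<and> z < a+t \<and> (a+t) powr g - a powr g = ((a+t) - a) * (g * z powr (g-1))"
    apply (rule MVT2)
    using t a by (auto intro!: has_real_derivative_powr)
  then obtain z where z: "a < z" "z < a+t" "(a+t) powr g - a powr g = t * (g * z powr (g-1))"
    by auto
  have "z powr (g-1) < a powr (g-1)"
    using z a g by (intro powr_less_mono2_neg) auto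
  then show "(a+t) powr g - a powr g < g*t*a powr (g-1)"
    using z(3) g t by (simp add: mult_strict_left_mono)
  have "(a+t) powr (g-1) < z powr (g-1)"
    using z a g by (intro powr_less_mono2_neg) auto
  then show "(a+t) powr g - a powr g > g*t*(a+t) powr (g-1)"
    using z(3) g t by (simp add: mult_strict_left_mono)
qed

lemma trap:
  fixes a g :: real
  assumes a: "a > 0" and g: "0 < g" "g < 1"
  shows "2*((a+1) powr (g+1) - a powr (g+1)) - (g+1)*((a+1) powr g + a powr g) > 0"
proof -
  define h where "h = (\<lambda>t. 2*((a+t) powr (g+1) - a powr (g+1)) - (g+1)*(t*((a+t) powr g + a powr g)))"
  define h' where "h' = (\<lambda>t. (g+1) * ((a+t) powr g - a powr g - g*t*(a+t) powr (g-1)))"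
  have D: "(h has_real_derivative h' t) (at t)" if "0 \<le> t" for t
  proof -
    have at: "a + t > 0" using a that by simp
    have "(h has_real_derivative
       2*((g+1) * (a+t) powr (g+1-1)) - (g+1)*(((a+t) powr g + a powr g) + t*(g * (a+t) powr (g-1))))
       (at t)"
      unfolding h_def using at
      by (auto intro!: derivative_eq_intros DERIV_cong[OF has_real_derivative_powr] simp: field_simps)
    moreover have "2*((g+1) * (a+t) powr (g+1-1)) - (g+1)*(((a+t) powr g + a powr g) + t*(g * (a+t) powr (g-1))) = h' t"
      unfolding h'_def by (simp add: algebra_simps)
    ultimately show ?thesis by simp
  qed
  have "\<exists>z. 0 < z \<and> z < 1 \<and> h 1 - h 0 = (1 - 0) * h' z"
    by (rule MVT2) (auto intro!: D)
  then obtain z where z: "0 < z" "z < 1" "h 1 - h 0 = h' z" by auto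
  have "h' z > 0"
    unfolding h'_def using conc_mvt(2)[OF a z(1) g] g by simp
  moreover have "h 0 = 0" unfolding h_def by simp
  ultimately show ?thesis using z unfolding h_def by simp
qed

theorem lemma3:
  fixes \<alpha> :: real and s :: nat
  assumes "0 < \<alpha>" and "\<alpha> < 1" and "s \<ge> 1"
  shows "1 / 2 < kappa \<alpha> s \<and> kappa \<alpha> s < 1 / (2 - \<alpha>)"
proof -
  define g where "g = 1 - \<alpha>"
  define a where "a = real s - 1 + (1 - \<alpha>/2)"
  have g: "0 < g" "g < 1" using assms unfolding g_def by auto
  have a: "a > 0" using assms unfolding a_def by auto
  have e1: "real s + (1 - \<alpha>/2) = a + 1" unfolding a_def by simp
  have e2: "2 - \<alpha> = g + 1" unfolding g_def by simp
  have e3: "1 - \<alpha> = g" unfolding g_def by simp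
  define N where "N = (a+1) powr (g+1) - a powr (g+1) - (g+1) * a powr g"
  define D where "D = (a+1) powr g - a powr g"
  have k: "kappa \<alpha> s = N / ((g+1) * D)"
    unfolding kappa_def Let_def N_def D_def e1 e2 e3 a_def[symmetric] by simp
  have Dpos: "D > 0" unfolding D_def using a g by (simp add: powr_less_mono2)
  have pos: "(g+1) * D > 0" using Dpos g by simp
  have low: "(g+1) * D < 2 * N"
    using trap[OF a g] unfolding N_def D_def by (simp add: algebra_simps)
  have p1: "(a+1) powr (g+1) = (a+1) * (a+1) powr g" using a by (simp add: powr_add)
  have p2: "a powr (g+1) = a * a powr g" using a by (simp add: powr_add)
  have p3: "a * a powr (g-1) = a powr g"
  proof -
    have "a powr g = a powr ((g-1) + 1)" by simp
    also have "\<dots> = a powr (g-1) * a" using a by (simp only: powr_add powr_one_gt_zero_iff) simp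
    finally show ?thesis by simp
  qed
  have c: "(a+1) powr g - a powr g < g * a powr (g-1)"
    using conc_mvt(1)[OF a _ g, of 1] by simp
  hence "a * ((a+1) powr g - a powr g) < a * (g * a powr (g-1))"
    using a by (simp add: mult_strict_left_mono)
  moreover have "a * (g * a powr (g-1)) = g * a powr g" using p3 by (simp add: algebra_simps)
  ultimately have c2: "a * ((a+1) powr g - a powr g) < g * a powr g" by simp
  have up: "N < D" unfolding N_def D_def p1 p2 using c2 by (simp add: algebra_simps)
  have "1/2 < N / ((g+1) * D)" using low pos by (simp add: field_simps)
  moreover have "N / ((g+1) * D) < 1 / (g+1)" proof -
    have "N * (g+1) < D * (g+1)" using up g by (intro mult_strict_right_mono) auto
    thus ?thesis using pos g by (simp add: field_simps)
  qed
  ultimately show ?thesis using k e2 by (simp only:)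
qed

end
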